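(* Let $d, d' \ge 1$ and $n \ge 1$ be integers, and let $\mathbb{K}=\mathbb{Q}=\{h_1,\dots,h_n\}\subset\mathbb{R}^d$ be any set of node representations. Consider the GAT family of scoring functions $\mathcal{F}_{\mathrm{GAT}}=\{e_{a,W} : a\in\mathbb{R}^{2d'},\ W\in\mathbb{R}^{d'\times d}\}$, where $$e_{a,W}(h_i,h_j)=\mathrm{LeakyReLU}\big(a^{\top}[\,W h_i \,\|\, W h_j\,]\big),$$ with attention coefficients $\alpha_{ij}=\exp(e(h_i,h_j))/\sum_{j'}\exp(e(h_i,h_{j'}))$ obtained by softmax normalization over keys. Then this family computes static attention for $\mathbb{K}$ and $\mathbb{Q}$. In particular, if $n>1$, it does not compute dynamic attention for $\mathbb{K}$ and $\mathbb{Q}$.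
   Context: Here $\|$ denotes vector concatenation and $\mathrm{LeakyReLU}(x)=x$ for $x\ge 0$ and $\mathrm{LeakyReLU}(x)=cx$ for $x<0$ with a fixed slope $0<c<1$. Write $[n]=\{1,\dots,n\}$. Static scoring: a family $\mathcal{F}$ of functions $\mathbb{R}^d\times\mathbb{R}^d\to\mathbb{R}$ computes static scoring for keys $\{k_1,\dots,k_n\}$ and queries $\{q_1,\dots,q_m\}$ if for every $f\in\mathcal{F}$ there is an index $j_f\in[n]$ such that $f(q_i,k_{j_f})\ge f(q_i,k_j)$ for all $i\in[m]$, $j\in[n]$. Dynamic scoring: $\mathcal{F}$ computes dynamic scoring for these keys and queries if for every map $\varphi:[m]\to[n]$ there is $f\in\mathcal{F}$ such that $f(q_i,k_{\varphi(i)})>f(q_i,k_j)$ for all $i\in[m]$ and all $j\in[n]$ with $j\neq\varphi(i)$. A family of attention functions computes static (resp. dynamic) attention if its scoring function family computes static (resp. dynamic) scoring, possibly followed by a monotonic normalization such as softmax. *)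

theory Defs
  imports "HOL-Analysis.Analysis"
begin

definition leaky_relu :: "real \<Rightarrow> real \<Rightarrow> real" where
  "leaky_relu c x = (if x \<ge> 0 then x else c * x)"

definition vconcat :: "real ^ 'm \<Rightarrow> real ^ 'm \<Rightarrow> real ^ ('m + 'm)" where
  "vconcat x y = (\<chi> i. case i of Inl k \<Rightarrow> x $ k | Inr k \<Rightarrow> y $ k)"

definition gat_score ::
  "real \<Rightarrow> real ^ ('d' + 'd') \<Rightarrow> real ^ 'd ^ 'd' \<Rightarrow> real ^ 'd \<Rightarrow> real ^ 'd \<Rightarrow> real" where
  "gat_score c a W hi hj = leaky_relu c (a \<bullet> vconcat (W *v hi) (W *v hj))"

text \<open>The GAT family of scoring functions; the hidden dimension d' is the type argument.\<close>
definition gat_family :: "'d'::finite itself \<Rightarrow> real \<Rightarrow> (real ^ 'd \<Rightarrow> real ^ 'd \<Rightarrow> real) set" where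
  "gat_family _ c = {f. \<exists>(a :: real ^ ('d' + 'd')) (W :: real ^ 'd ^ 'd'). f = gat_score c a W}"

definition static_scoring ::
  "('v \<Rightarrow> 'v \<Rightarrow> real) set \<Rightarrow> (nat \<Rightarrow> 'v) \<Rightarrow> nat \<Rightarrow> (nat \<Rightarrow> 'v) \<Rightarrow> nat \<Rightarrow> bool" where
  "static_scoring F k n q m \<longleftrightarrow>
     (\<forall>f\<in>F. \<exists>jf\<in>{1..n}. \<forall>i\<in>{1..m}. \<forall>j\<in>{1..n}. f (q i) (k jf) \<ge> f (q i) (k j))"

definition dynamic_scoring ::
  "('v \<Rightarrow> 'v \<Rightarrow> real) set \<Rightarrow> (nat \<Rightarrow> 'v) \<Rightarrow> nat \<Rightarrow> (nat \<Rightarrow> 'v) \<Rightarrow> nat \<Rightarrow> bool" where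
  "dynamic_scoring F k n q m \<longleftrightarrow>
     (\<forall>\<phi>. (\<forall>i\<in>{1..m}. \<phi> i \<in> {1..n}) \<longrightarrow>
        (\<exists>f\<in>F. \<forall>i\<in>{1..m}. \<forall>j\<in>{1..n}. j \<noteq> \<phi> i \<longrightarrow> f (q i) (k (\<phi> i)) > f (q i) (k j)))"

text \<open>A family of attention functions computes static (dynamic) attention iff its
  scoring family computes static (dynamic) scoring; the softmax normalisation is
  monotone and does not affect this.\<close>
abbreviation static_attention where "static_attention \<equiv> static_scoring"
abbreviation dynamic_attention where "dynamic_attention \<equiv> dynamic_scoring"

end

theory Submission
  imports Defs
begin

lemma vconcat_split:
  fixes a :: "real ^ ('m::finite + 'm)"
  shows "a \<bullet> vconcat x y = (\<Sum>k\<in>UNIV. a $ Inl k * x $ k) + (\<Sum>k\<in>UNIV. a $ Inr k * y $ k)"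
proof -
  have "a \<bullet> vconcat x y = (\<Sum>i\<in>UNIV <+> UNIV. a $ i * vconcat x y $ i)"
    by (simp add: inner_vec_def UNIV_Plus_UNIV)
  also have "\<dots> = (\<Sum>k\<in>UNIV. a $ Inl k * x $ k) + (\<Sum>k\<in>UNIV. a $ Inr k * y $ k)"
    by (subst sum.Plus) (auto simp: vconcat_def o_def)
  finally show ?thesis .
qed

lemma leaky_mono:
  assumes "0 < c" "x \<le> y" shows "leaky_relu c x \<le> leaky_relu c y"
proof -
  have "c * x \<le> c * y" using assms by (simp add: mult_left_mono)
  moreover have "x < 0 \<Longrightarrow> c * x < 0" using assms(1) by (simp add: mult_pos_neg)
  ultimately show ?thesis using assms unfolding leaky_relu_def by auto
qed

lemma static_part:
  fixes c :: real and n :: nat and h :: "nat \<Rightarrow> real ^ 'd"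
  assumes "0 < c" and "n \<ge> 1"
  shows "static_scoring (gat_family TYPE('d'::finite) c) h n h n"
  unfolding static_scoring_def
proof
  fix f :: "real ^ 'd \<Rightarrow> real ^ 'd \<Rightarrow> real" assume "f \<in> gat_family TYPE('d') c"
  then obtain a :: "real ^ ('d' + 'd')" and W :: "real ^ 'd ^ 'd'" where f: "f = gat_score c a W"
    unfolding gat_family_def by blast
  define t where "t j = (\<Sum>k\<in>UNIV. a $ Inr k * (W *v h j) $ k)" for j
  have "finite (t ` {1..n})" "t ` {1..n} \<noteq> {}" using assms by auto
  then have "Max (t ` {1..n}) \<in> t ` {1..n}" by (rule Max_in)
  then obtain jf where jf: "jf \<in> {1..n}" "t jf = Max (t ` {1..n})" by auto
  have "\<forall>j\<in>{1..n}. t j \<le> t jf" using jf by simp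
  then show "\<exists>jf\<in>{1..n}. \<forall>i\<in>{1..n}. \<forall>j\<in>{1..n}. f (h i) (h j) \<le> f (h i) (h jf)"
    using jf(1) unfolding f gat_score_def
    by (intro bexI[of _ jf]) (auto intro!: leaky_mono assms simp: vconcat_split t_def)
qed

theorem theorem1:
  fixes c :: real and n :: nat and h :: "nat \<Rightarrow> real ^ 'd"
  assumes "0 < c" and "c < 1" and "n \<ge> 1"
  shows "static_attention (gat_family TYPE('d'::finite) c) h n h n
       \<and> (n > 1 \<longrightarrow> \<not> dynamic_attention (gat_family TYPE('d'::finite) c) h n h n)"
proof -
  have S: "static_scoring (gat_family TYPE('d'::finite) c) h n h n"
    using static_part assms by blast
  show ?thesis
  proof (intro conjI impI notI S)
    assume "n > 1" and D: "dynamic_scoring (gat_family TYPE('d'::finite) c) h n h n"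
    define \<phi> :: "nat \<Rightarrow> nat" where "\<phi> i = (if i = 1 then 1 else 2)" for i
    have "\<forall>i\<in>{1..n}. \<phi> i \<in> {1..n}" using \<open>n > 1\<close> by (auto simp: \<phi>_def)
    then obtain f where fF: "f \<in> gat_family TYPE('d'::finite) c" and
      fd: "\<forall>i\<in>{1..n}. \<forall>j\<in>{1..n}. j \<noteq> \<phi> i \<longrightarrow> f (h i) (h (\<phi> i)) > f (h i) (h j)"
      using D unfolding dynamic_scoring_def by blast
    obtain jf where jf: "jf \<in> {1..n}" "\<forall>i\<in>{1..n}. \<forall>j\<in>{1..n}. f (h i) (h j) \<le> f (h i) (h jf)"
      using S fF unfolding static_scoring_def by blast
    have 1: "1 \<in> {1..n}" "2 \<in> {1..n}" using \<open>n > 1\<close> by auto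
    have "jf = 1"
    proof (rule ccontr)
      assume "jf \<noteq> 1"
      moreover have "\<phi> 1 = 1" by (simp add: \<phi>_def)
      ultimately have "f (h 1) (h 1) > f (h 1) (h jf)" using fd 1 jf(1) by metis
      then show False using jf 1 by force
    qed
    moreover have "\<phi> 2 = 2" by (simp add: \<phi>_def)
    ultimately have "f (h 2) (h 2) > f (h 2) (h 1)" using fd 1 by (metis numeral_One numeral_eq_iff semiring_norm(85))
    moreover have "f (h 2) (h 2) \<le> f (h 2) (h jf)" using jf(2) 1 by blast
    ultimately show False using \<open>jf = 1\<close> by simp
  qed
qed

end
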